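(* Let $\Omega$ be a finite search space, let $f$ be an information resource, and let $\mathcal{A}$ be a search algorithm which, run with $f$, produces a random finite sequence $\tilde{P}=(P_1,\dots,P_{|\tilde{P}|})$ of probability distributions on $\Omega$ together with a search history $H$, with joint law $\nu(\cdot\mid f)$. Let $\alpha$ be a rule assigning to each sequence length $n$ a probability distribution $(\alpha_1,\dots,\alpha_n)$ on $\{1,\dots,n\}$. For a target set $t\subseteq\Omega$ define the general probability of success $$q_\alpha(t,f)=\mathbb{E}_{\tilde{P},H}\Big[\sum_{i=1}^{|\tilde{P}|}\alpha_i P_i(w\in t)\,\Big|\, f\Big].$$ Then $q_\alpha$ is decomposable: defining the vector $\mathbf{P}_{\alpha,f}\in\mathbb{R}^{|\Omega|}$ by $\mathbf{P}_{\alpha,f}(x)=\int \sum_{i=1}^{|\tilde{P}|}\alpha_i P_i(x)\,\mathrm{d}\nu(\tilde{P},h\mid f)$ for $x\in\Omega$, $\mathbf{P}_{\alpha,f}$ is a probability distribution on $\Omega$ that does not depend on $t$, and for every $t\subseteq\Omega$, $$q_\alpha(t,f)=\mathbf{t}^\top\mathbf{P}_{\alpha,f},$$ where $\mathbf{t}\in\{0,1\}^{|\Omega|}$ is the indicator vector of $t$.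
   Context: A probability-of-success metric $\phi$ assigns to each target set $t\subseteq\Omega$ and information resource $f$ a success probability. It is called decomposable if for each $f$ there exists a probability vector $\mathbf{P}_{\phi,f}\in\mathbb{R}^{|\Omega|}$ (nonnegative entries summing to $1$), not a function of $t$, such that $\phi(t,f)=\mathbf{t}^\top\mathbf{P}_{\phi,f}$ for all $t$, where $\mathbf{t}$ is the $0/1$ indicator vector of $t$. *)

theory Defs
  imports "HOL-Probability.Probability"
begin

definition prob_vector :: "('w::finite \<Rightarrow> real) \<Rightarrow> bool" where
  "prob_vector p \<longleftrightarrow> (\<forall>x. 0 \<le> p x) \<and> (\<Sum>x\<in>UNIV. p x) = 1"

definition prob_of :: "('w::finite \<Rightarrow> real) \<Rightarrow> 'w set \<Rightarrow> real" where
  "prob_of p t = (\<Sum>x\<in>t. p x)"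

definition decomposable :: "('w::finite set \<Rightarrow> 'f \<Rightarrow> real) \<Rightarrow> bool" where
  "decomposable \<phi> \<longleftrightarrow>
     (\<forall>f. \<exists>P. prob_vector P \<and> (\<forall>t. \<phi> t f = (\<Sum>x\<in>UNIV. (if x \<in> t then 1 else 0) * P x)))"

definition weight_rule :: "(nat \<Rightarrow> nat \<Rightarrow> real) \<Rightarrow> bool" where
  "weight_rule \<alpha> \<longleftrightarrow> (\<forall>n\<ge>1. (\<forall>i\<in>{1..n}. 0 \<le> \<alpha> n i) \<and> (\<Sum>i=1..n. \<alpha> n i) = 1)"

text \<open>Weighted mixture sum_{i=1}^{|P~|} alpha_i P_i of a sequence of distributions
  (list index i-1 holds P_i).\<close>
definition mix :: "(nat \<Rightarrow> nat \<Rightarrow> real) \<Rightarrow> ('w \<Rightarrow> real) list \<Rightarrow> 'w \<Rightarrow> real" where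
  "mix \<alpha> ps x = (\<Sum>i=1..length ps. \<alpha> (length ps) i * (ps ! (i - 1)) x)"

text \<open>General probability of success q_alpha(t,f) = E[sum alpha_i P_i(w in t) | f],
  where nu f is the joint law of (P~, H) given f.\<close>
definition q_gen :: "(nat \<Rightarrow> nat \<Rightarrow> real) \<Rightarrow> ('f \<Rightarrow> (('w::finite \<Rightarrow> real) list \<times> 'h) measure)
    \<Rightarrow> 'w set \<Rightarrow> 'f \<Rightarrow> real" where
  "q_gen \<alpha> \<nu> t f = (\<integral>(ps, h). (\<Sum>i=1..length ps. \<alpha> (length ps) i * prob_of (ps ! (i - 1)) t) \<partial>\<nu> f)"

end

theory Submission
  imports Defs
begin

lemma pv_le1:
  fixes p :: "'w::finite \<Rightarrow> real"
  assumes "prob_vector p" shows "p x \<le> 1"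
proof -
  have "p x \<le> (\<Sum>y\<in>UNIV. p y)"
    by (rule member_le_sum) (use assms in \<open>auto simp: prob_vector_def\<close>)
  thus ?thesis using assms by (simp add: prob_vector_def)
qed

lemma mix_props:
  fixes ps :: "('w::finite \<Rightarrow> real) list"
  assumes alpha: "weight_rule \<alpha>" and ne: "ps \<noteq> []" and pv: "\<forall>p\<in>set ps. prob_vector p"
  shows "0 \<le> mix \<alpha> ps x" "mix \<alpha> ps x \<le> 1" "(\<Sum>y\<in>UNIV. mix \<alpha> ps y) = 1"
proof -
  let ?n = "length ps"
  have n1: "?n \<ge> 1" using ne by (cases ps) auto
  have a0: "\<And>i. i \<in> {1..?n} \<Longrightarrow> 0 \<le> \<alpha> ?n i" and as: "(\<Sum>i=1..?n. \<alpha> ?n i) = 1"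
    using alpha n1 unfolding weight_rule_def by auto
  have pi: "\<And>i. i \<in> {1..?n} \<Longrightarrow> prob_vector (ps ! (i - 1))"
    proof -
    fix i assume "i \<in> {1..?n}"
    hence "i - 1 < ?n" by auto
    thus "prob_vector (ps ! (i - 1))" using pv nth_mem by blast
  qed
  show "0 \<le> mix \<alpha> ps x" unfolding mix_def
    by (rule sum_nonneg) (use a0 pi in \<open>auto simp: prob_vector_def\<close>)
  have "mix \<alpha> ps x \<le> (\<Sum>i=1..?n. \<alpha> ?n i * 1)" unfolding mix_def
    by (rule sum_mono, rule mult_left_mono) (use a0 pi pv_le1 in auto)
  thus "mix \<alpha> ps x \<le> 1" using as by simp
  have "(\<Sum>y\<in>UNIV. mix \<alpha> ps y) = (\<Sum>i=1..?n. \<alpha> ?n i * (\<Sum>y\<in>UNIV. (ps ! (i - 1)) y))"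
    unfolding mix_def by (simp add: sum_distrib_left sum.swap[of _ UNIV])
  also have "\<dots> = (\<Sum>i=1..?n. \<alpha> ?n i)"
    by (rule sum.cong) (use pi in \<open>auto simp: prob_vector_def\<close>)
  finally show "(\<Sum>y\<in>UNIV. mix \<alpha> ps y) = 1" using as by simp
qed

theorem lemma2:
  fixes \<alpha> :: "nat \<Rightarrow> nat \<Rightarrow> real"
    and \<nu> :: "'f \<Rightarrow> (('w::finite \<Rightarrow> real) list \<times> 'h) measure"
  assumes alpha: "weight_rule \<alpha>"
    and law: "\<And>f. prob_space (\<nu> f)"
    and dists: "\<And>f. \<forall>(ps, h) \<in> space (\<nu> f). ps \<noteq> [] \<and> (\<forall>p \<in> set ps. prob_vector p)"
    and meas: "\<And>f x. (\<lambda>(ps, h). mix \<alpha> ps x) \<in> borel_measurable (\<nu> f)"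
  shows "decomposable (q_gen \<alpha> \<nu>)
     \<and> (\<forall>f. prob_vector (\<lambda>x. \<integral>(ps, h). mix \<alpha> ps x \<partial>\<nu> f)
          \<and> (\<forall>t. q_gen \<alpha> \<nu> t f
                 = (\<Sum>x\<in>UNIV. (if x \<in> t then 1 else 0) * (\<integral>(ps, h). mix \<alpha> ps x \<partial>\<nu> f))))"
proof -
  have main: "prob_vector (\<lambda>x. \<integral>(ps, h). mix \<alpha> ps x \<partial>\<nu> f)
          \<and> (\<forall>t. q_gen \<alpha> \<nu> t f
                 = (\<Sum>x\<in>UNIV. (if x \<in> t then 1 else 0) * (\<integral>(ps, h). mix \<alpha> ps x \<partial>\<nu> f)))" for f
  proof -
    interpret prob_space "\<nu> f" by (rule law)
    have bnd: "\<And>z x. z \<in> space (\<nu> f) \<Longrightarrow> 0 \<le> (case z of (ps, h) \<Rightarrow> mix \<alpha> ps x) \<and> (case z of (ps, h) \<Rightarrow> mix \<alpha> ps x) \<le> 1"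
    proof -
      fix z x assume "z \<in> space (\<nu> f)"
      then obtain ps h where z: "z = (ps, h)" "ps \<noteq> []" "\<forall>p\<in>set ps. prob_vector p"
        using dists[of f] by (cases z) auto
      show "0 \<le> (case z of (ps, h) \<Rightarrow> mix \<alpha> ps x) \<and> (case z of (ps, h) \<Rightarrow> mix \<alpha> ps x) \<le> 1"
        using mix_props(1,2)[OF alpha z(2,3)] z(1) by simp
    qed
    have sum1: "\<And>z. z \<in> space (\<nu> f) \<Longrightarrow> (\<Sum>x\<in>UNIV. (case z of (ps, h) \<Rightarrow> mix \<alpha> ps x)) = 1"
    proof -
      fix z assume "z \<in> space (\<nu> f)"
      then obtain ps h where z: "z = (ps, h)" "ps \<noteq> []" "\<forall>p\<in>set ps. prob_vector p"
        using dists[of f] by (cases z) auto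
      show "(\<Sum>x\<in>UNIV. (case z of (ps, h) \<Rightarrow> mix \<alpha> ps x)) = 1"
        using mix_props(3)[OF alpha z(2,3)] z(1) by simp
    qed
    have int: "integrable (\<nu> f) (\<lambda>(ps, h). mix \<alpha> ps x)" for x
      by (rule integrable_const_bound[where B=1]) (use bnd meas in auto)
    have "(\<Sum>x\<in>UNIV. \<integral>(ps, h). mix \<alpha> ps x \<partial>\<nu> f) = (\<integral>z. (\<Sum>x\<in>UNIV. (case z of (ps, h) \<Rightarrow> mix \<alpha> ps x)) \<partial>\<nu> f)"
      using Bochner_Integration.integral_sum[where I=UNIV and M="\<nu> f" and f="\<lambda>x z. case z of (ps, h) \<Rightarrow> mix \<alpha> ps x", symmetric] int by simp
    also have "\<dots> = (\<integral>z. 1 \<partial>\<nu> f)"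
      by (rule Bochner_Integration.integral_cong[OF refl]) (use sum1 in auto)
    finally have s: "(\<Sum>x\<in>UNIV. \<integral>(ps, h). mix \<alpha> ps x \<partial>\<nu> f) = 1" by (simp add: prob_space)
    have nn: "0 \<le> (\<integral>(ps, h). mix \<alpha> ps x \<partial>\<nu> f)" for x
      by (rule integral_nonneg_AE) (use bnd in auto)
    have pv: "prob_vector (\<lambda>x. \<integral>(ps, h). mix \<alpha> ps x \<partial>\<nu> f)"
      using s nn unfolding prob_vector_def by auto
    have q: "q_gen \<alpha> \<nu> t f
                 = (\<Sum>x\<in>UNIV. (if x \<in> t then 1 else 0) * (\<integral>(ps, h). mix \<alpha> ps x \<partial>\<nu> f))" for t
    proof -
      have key: "(\<Sum>i=1..length ps. \<alpha> (length ps) i * prob_of (ps ! (i - 1)) t)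
           = (\<Sum>x\<in>UNIV. (if x \<in> t then 1 else 0) * mix \<alpha> ps x)" for ps :: "('w \<Rightarrow> real) list"
      proof -
        have "(\<Sum>x\<in>UNIV. (if x \<in> t then 1 else 0) * mix \<alpha> ps x) = (\<Sum>x\<in>t. mix \<alpha> ps x)"
          by (simp add: if_distrib[of "\<lambda>c. c * _"] sum.If_cases)
        also have "\<dots> = (\<Sum>i=1..length ps. \<alpha> (length ps) i * prob_of (ps ! (i - 1)) t)"
          unfolding mix_def prob_of_def by (simp add: sum_distrib_left sum.swap[of _ t])
        finally show ?thesis by simp
      qed
      have pt: "(\<lambda>(ps, h). (\<Sum>i=1..length ps. \<alpha> (length ps) i * prob_of (ps ! (i - 1)) t))
         = (\<lambda>z. \<Sum>x\<in>UNIV. (if x \<in> t then 1 else 0) * (case z of (ps, h) \<Rightarrow> mix \<alpha> ps x))"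
        by (rule ext) (simp only: split_beta key)
      have "q_gen \<alpha> \<nu> t f = (\<integral>z. (\<Sum>x\<in>UNIV. (if x \<in> t then 1 else 0) * (case z of (ps, h) \<Rightarrow> mix \<alpha> ps x)) \<partial>\<nu> f)"
        unfolding q_gen_def pt ..
      also have "\<dots> = (\<Sum>x\<in>UNIV. (\<integral>z. (if x \<in> t then 1 else 0) * (case z of (ps, h) \<Rightarrow> mix \<alpha> ps x) \<partial>\<nu> f))"
        using Bochner_Integration.integral_sum[where I=UNIV and M="\<nu> f" and f="\<lambda>x z. (if x \<in> t then 1 else 0) * (case z of (ps, h) \<Rightarrow> mix \<alpha> ps x)"] int by simp
      also have "\<dots> = (\<Sum>x\<in>UNIV. (if x \<in> t then 1 else 0) * (\<integral>(ps, h). mix \<alpha> ps x \<partial>\<nu> f))"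
        by simp
      finally show ?thesis .
    qed
    show ?thesis using pv q by blast
  qed
  show ?thesis unfolding decomposable_def using main by blast
qed

end
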